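(* The time evolution commutes with unbasketing: for every state $S=(S_i)_{i\in\mathbb Z}$ of the box-basket-ball system, choosing an index $i_0$ such that $S_i=V$ and $(T_\infty S)_i=V$ for all $i\le i_0$ and anchoring both unbasketings so that site $i_0$ is sent to cell $0$, one has $\mathrm{Unb}(T_\infty(S))=T_{BBS}(\mathrm{Unb}(S))$.
   Context: Box-basket-ball system (BBBS). A site state is a triple $(a,b,c)$ of nonnegative integers with $a=b-c+1$ (one box, $b$ baskets, $c$ balls; each box/basket holds at most one ball, balls placed in the box first). $V=(1,0,0)$. A state is a sequence $(S_i)_{i\in\mathbb Z}$ of site states with $S_i=V$ for all but finitely many $i$. The time evolution $T_\infty$: first every empty basket (there are $\min(a_i,b_i)$ at site $i$) is moved from site $i$ to site $i+1$, full baskets staying; then the balls are taken one at a time from left to right, and each is moved to the nearest currently unoccupied box or basket at a site strictly to its right (each ball moves exactly once). Box-ball system (BBS): a state is a $\{0,1\}$-valued sequence indexed by $\mathbb Z$ (cells; $1$ = ball) with finitely many $1$'s; its time evolution $T_{BBS}$ takes the balls one at a time from left to right and moves each to the nearest currently empty cell to its right. Unbasketing $\mathrm{Unb}$: each site $(a,b,c)$ is replaced by $b+1$ consecutive cells of the box-ball system, the first $c$ of which contain a ball; doing this for all sites in order gives a box-ball state (determined once one fixes which cell a given site starts at). *)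

theory Defs
  imports Main
begin

text \<open>A site state (a,b,c): a = number of unoccupied containers, b baskets, c balls.\<close>
type_synonym site = "nat \<times> nat \<times> nat"
type_synonym bbbs_state = "int \<Rightarrow> site"

definition s_a :: "site \<Rightarrow> nat" where "s_a s = fst s"
definition s_b :: "site \<Rightarrow> nat" where "s_b s = fst (snd s)"
definition s_c :: "site \<Rightarrow> nat" where "s_c s = snd (snd s)"

definition valid_site :: "site \<Rightarrow> bool" where
  "valid_site s \<longleftrightarrow> int (s_a s) = int (s_b s) - int (s_c s) + 1"

definition Vsite :: site where "Vsite = (1, 0, 0)"

definition is_bbbs_state :: "bbbs_state \<Rightarrow> bool" where
  "is_bbbs_state S \<longleftrightarrow> (\<forall>i. valid_site (S i)) \<and> finite {i. S i \<noteq> Vsite}"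

definition empty_baskets :: "site \<Rightarrow> nat" where
  "empty_baskets s = min (s_a s) (s_b s)"

text \<open>After moving empty baskets one site to the right: number of baskets at site i.\<close>
definition baskets_after :: "bbbs_state \<Rightarrow> int \<Rightarrow> nat" where
  "baskets_after S i = s_b (S i) - empty_baskets (S i) + empty_baskets (S (i - 1))"

text \<open>Capacity (box plus baskets) of site i after the basket move.\<close>
definition cap_after :: "bbbs_state \<Rightarrow> int \<Rightarrow> nat" where
  "cap_after S i = 1 + baskets_after S i"

text \<open>Move one ball from site p to the nearest site strictly to its right having an
  unoccupied box or basket; occ gives the current number of occupied containers.\<close>
definition bbbs_move :: "(int \<Rightarrow> nat) \<Rightarrow> (int \<Rightarrow> nat) \<Rightarrow> int \<Rightarrow> (int \<Rightarrow> nat)" where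
  "bbbs_move cap occ p =
     (let t = (LEAST t. p < t \<and> occ t < cap t) in occ(p := occ p - 1, t := occ t + 1))"

definition ball_list :: "bbbs_state \<Rightarrow> int list" where
  "ball_list S = concat (map (\<lambda>k. replicate (s_c (S k)) k)
                          (sorted_list_of_set {k. 0 < s_c (S k)}))"

definition T_inf :: "bbbs_state \<Rightarrow> bbbs_state" where
  "T_inf S =
    (let cap = cap_after S;
         occ = fold (\<lambda>p occ. bbbs_move cap occ p) (ball_list S) (\<lambda>i. s_c (S i))
     in (\<lambda>i. (cap i - occ i, cap i - 1, occ i)))"

type_synonym bbs_state = "int \<Rightarrow> bool"

definition bbs_move :: "int set \<Rightarrow> int \<Rightarrow> int set" where
  "bbs_move Occ p = (let t = (LEAST t. p < t \<and> t \<notin> Occ) in insert t (Occ - {p}))"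

definition T_BBS :: "bbs_state \<Rightarrow> bbs_state" where
  "T_BBS f = (\<lambda>n. n \<in> fold (\<lambda>p Occ. bbs_move Occ p) (sorted_list_of_set {n. f n}) {n. f n})"

text \<open>First cell of site i when site i0 is sent to cell 0; site j occupies b_j + 1 cells.\<close>
definition site_start :: "bbbs_state \<Rightarrow> int \<Rightarrow> int \<Rightarrow> int" where
  "site_start S i0 i =
     (if i0 \<le> i then (\<Sum>j\<in>{i0..<i}. int (s_b (S j)) + 1)
      else - (\<Sum>j\<in>{i..<i0}. int (s_b (S j)) + 1))"

definition Unb :: "bbbs_state \<Rightarrow> int \<Rightarrow> bbs_state" where
  "Unb S i0 = (\<lambda>n. \<exists>i. site_start S i0 i \<le> n \<and> n < site_start S i0 i + int (s_c (S i)))"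

end

theory Submission imports Defs begin

definition fill :: "(int \<Rightarrow> nat) \<Rightarrow> int \<Rightarrow> nat \<Rightarrow> int \<Rightarrow> nat" where
 "fill sl s n i = (if s \<le> i then min (sl i) (n - (\<Sum>l\<in>{s..<i}. sl l)) else 0)"

lemma ivl_insert: "s \<le> i \<Longrightarrow> {s..<i+1} = insert i {s..<(i::int)}" by auto
lemma ivl_insert_left: "s < i \<Longrightarrow> {s..<i} = insert s {s+1..<(i::int)}" by auto

lemma fill_shift:
  assumes "j < i"
  shows "fill sl j K i = fill sl (j+1) (K - sl j) i"
proof -
  have "(\<Sum>l\<in>{j..<i}. sl l) = sl j + (\<Sum>l\<in>{j+1..<i}. sl l)"
    using assms by (simp add: ivl_insert_left)
  then show ?thesis using assms unfolding fill_def by (simp add: diff_diff_left)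
qed

lemma fill_zero: "fill sl s 0 i = 0" by (simp add: fill_def)

lemma fill_at: "fill sl s K s = min (sl s) K" by (simp add: fill_def)

lemma sum_full_le:
  assumes "s \<le> t" and "\<forall>i. s \<le> i \<and> i < t \<longrightarrow> fill sl s n i = sl i"
  shows "(\<Sum>l\<in>{s..<t}. sl l) \<le> n"
  using assms
proof (induction t rule: int_ge_induct)
  case base then show ?case by simp
next
  case (step i)
  then have IH: "(\<Sum>l\<in>{s..<i}. sl l) \<le> n" by auto
  have "fill sl s n i = sl i" using step by auto
  then have "sl i \<le> n - (\<Sum>l\<in>{s..<i}. sl l)" using step(1) by (simp add: fill_def)
  then show ?case using IH step(1) by (simp add: ivl_insert)
qed

lemma fill_le: "fill sl s n i \<le> sl i" by (simp add: fill_def)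

lemma fill_exists:
  assumes "\<forall>i\<ge>hi. 1 \<le> sl i"
  shows "\<exists>t. s \<le> t \<and> fill sl s n t < sl t"
proof -
  define m where "m = max s hi"
  define t where "t = m + int n + 1"
  have sub: "{m..<t} \<subseteq> {s..<t}" by (auto simp: m_def)
  have "(\<Sum>l\<in>{m..<t}. (1::nat)) \<le> (\<Sum>l\<in>{m..<t}. sl l)"
    by (rule sum_mono) (use assms in \<open>auto simp: m_def\<close>)
  moreover have "(\<Sum>l\<in>{m..<t}. (1::nat)) = n + 1" by (simp add: t_def)
  moreover have "(\<Sum>l\<in>{m..<t}. sl l) \<le> (\<Sum>l\<in>{s..<t}. sl l)"
    by (rule sum_mono2) (use sub in auto)
  ultimately have "n < (\<Sum>l\<in>{s..<t}. sl l)" by linarith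
  moreover have "1 \<le> sl t" using assms by (auto simp: t_def m_def)
  moreover have "s \<le> t" by (auto simp: t_def m_def)
  ultimately show ?thesis unfolding fill_def by (intro exI[of _ t]) auto
qed

lemma fill_step:
  fixes sl :: "int \<Rightarrow> nat" and s hi :: int and n :: nat
  assumes "\<forall>i\<ge>hi. 1 \<le> sl i"
  defines "t \<equiv> LEAST t. s \<le> t \<and> fill sl s n t < sl t"
  shows "s \<le> t" "fill sl s n t < sl t"
    "fill sl s (Suc n) = (\<lambda>i. fill sl s n i + (if i = t then 1 else 0))"
proof -
  obtain t0 where t0: "s \<le> t0 \<and> fill sl s n t0 < sl t0" using fill_exists[OF assms(1)] by blast
  have "\<exists>x. s \<le> x \<and> fill sl s n x < sl x \<and> (\<forall>y. s \<le> y \<and> fill sl s n y < sl y \<longrightarrow> x \<le> y)"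
  proof -
    let ?A = "{x. s \<le> x \<and> x \<le> t0 \<and> fill sl s n x < sl x}"
    have fin: "finite ?A" by (rule finite_subset[of _ "{s..t0}"]) auto
    have ne: "t0 \<in> ?A" using t0 by auto
    define x where "x = Min ?A"
    have "x \<in> ?A" unfolding x_def using fin ne by (intro Min_in) auto
    moreover have "\<forall>y. s \<le> y \<and> fill sl s n y < sl y \<longrightarrow> x \<le> y"
    proof (intro allI impI)
      fix y assume y: "s \<le> y \<and> fill sl s n y < sl y"
      show "x \<le> y"
      proof (cases "y \<le> t0")
        case True then have "y \<in> ?A" using y by auto
        then show ?thesis unfolding x_def using fin by auto
      next
        case False then show ?thesis using \<open>x \<in> ?A\<close> by auto
      qed
    qed
    ultimately show ?thesis by blast
  qed
  then obtain x where x: "s \<le> x \<and> fill sl s n x < sl x" "\<forall>y. s \<le> y \<and> fill sl s n y < sl y \<longrightarrow> x \<le> y"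
    by blast
  have tx: "t = x" unfolding t_def by (rule Least_equality) (use x in auto)
  have P: "s \<le> t \<and> fill sl s n t < sl t" using x tx by auto
  have min: "\<And>y. s \<le> y \<Longrightarrow> fill sl s n y < sl y \<Longrightarrow> t \<le> y"
    using x tx by auto
  show "s \<le> t" "fill sl s n t < sl t" using P by auto
  have full: "\<forall>i. s \<le> i \<and> i < t \<longrightarrow> fill sl s n i = sl i"
    using min fill_le[of sl s n] by (meson le_less not_le)
  have St: "(\<Sum>l\<in>{s..<t}. sl l) \<le> n" using sum_full_le[OF _ full] P by auto
  have ltt: "n - (\<Sum>l\<in>{s..<t}. sl l) < sl t" using P by (simp add: fill_def min_def split: if_splits)
  show "fill sl s (Suc n) = (\<lambda>i. fill sl s n i + (if i = t then 1 else 0))"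
  proof
    fix i
    consider "i < s" | "s \<le> i" "i < t" | "i = t" | "t < i" by linarith
    then show "fill sl s (Suc n) i = fill sl s n i + (if i = t then 1 else 0)"
    proof cases
      case 1 then show ?thesis using P by (auto simp: fill_def)
    next
      case 2
      then have "fill sl s n i = sl i" using full by auto
      then have "sl i \<le> n - (\<Sum>l\<in>{s..<i}. sl l)" using 2 by (simp add: fill_def)
      then show ?thesis using 2 by (auto simp: fill_def)
    next
      case 3 then show ?thesis using P St ltt by (auto simp: fill_def)
    next
      case 4
      have "(\<Sum>l\<in>{s..<t+1}. sl l) \<le> (\<Sum>l\<in>{s..<i}. sl l)"
        by (rule sum_mono2) (use 4 in auto)
      moreover have "(\<Sum>l\<in>{s..<t+1}. sl l) = sl t + (\<Sum>l\<in>{s..<t}. sl l)"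
        using P by (simp add: ivl_insert)
      ultimately have "Suc n \<le> (\<Sum>l\<in>{s..<i}. sl l)" using St ltt by linarith
      then show ?thesis using 4 P by (auto simp: fill_def)
    qed
  qed
qed

fun kar :: "(int \<Rightarrow> nat) \<Rightarrow> (int \<Rightarrow> nat) \<Rightarrow> int \<Rightarrow> nat \<Rightarrow> nat" where
  "kar cap c lo 0 = 0"
| "kar cap c lo (Suc m) = (kar cap c lo m - (cap (lo + int m) - c (lo + int m))) + c (lo + int m)"

lemma moves:
  fixes cap c :: "int \<Rightarrow> nat"
  assumes cap1: "\<forall>i. 1 \<le> cap i" and le: "\<forall>i. c i \<le> cap i" and hi: "\<forall>i\<ge>hi. c i = 0"
    and occ: "\<forall>i>j. occ i = c i + fill (\<lambda>i. cap i - c i) (j+1) n i"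
  shows "((\<lambda>occ. bbbs_move cap occ j)^^r) occ
     = (\<lambda>i. if i = j then occ j - r else if j < i then c i + fill (\<lambda>i. cap i - c i) (j+1) (n + r) i else occ i)"
proof (induction r)
  case 0 then show ?case using occ by auto
next
  case (Suc r)
  define sl where "sl = (\<lambda>i. cap i - c i)"
  define oc where "oc = (\<lambda>i. if i = j then occ j - r else if j < i then c i + fill sl (j+1) (n + r) i else occ i)"
  have slhi: "\<forall>i\<ge>hi. 1 \<le> sl i" using hi cap1 by (auto simp: sl_def)
  define t where "t = (LEAST t. j+1 \<le> t \<and> fill sl (j+1) (n+r) t < sl t)"
  note fs = fill_step[OF slhi, of "j+1" "n+r", folded t_def]
  have eqP: "(\<lambda>t. j < t \<and> oc t < cap t) = (\<lambda>t. j+1 \<le> t \<and> fill sl (j+1) (n+r) t < sl t)"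
  proof
    fix t
    show "(j < t \<and> oc t < cap t) = (j+1 \<le> t \<and> fill sl (j+1) (n+r) t < sl t)"
      using le[rule_format, of t] by (auto simp: oc_def sl_def)
  qed
  have "bbbs_move cap oc j = oc(j := oc j - 1, t := oc t + 1)"
    unfolding bbbs_move_def eqP t_def by (simp add: Let_def)
  moreover have "((\<lambda>occ. bbbs_move cap occ j)^^(Suc r)) occ = bbbs_move cap oc j"
    using Suc unfolding oc_def sl_def by simp
  ultimately show ?case using fs by (auto simp: oc_def sl_def[symmetric] fun_eq_iff)
qed

lemma inv:
  fixes cap c :: "int \<Rightarrow> nat"
  assumes cap1: "\<forall>i. 1 \<le> cap i" and le: "\<forall>i. c i \<le> cap i" and hi: "\<forall>i\<ge>hi. c i = 0"
  shows "fold (\<lambda>p occ. bbbs_move cap occ p) (concat (map (\<lambda>m. replicate (c (lo + int m)) (lo + int m)) [0..<m])) c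
   = (\<lambda>i. if i < lo + int m then (if i < lo then c i else min (kar cap c lo (nat (i - lo))) (cap i - c i))
          else c i + fill (\<lambda>i. cap i - c i) (lo + int m) (kar cap c lo m) i)"
proof (induction m)
  case 0 then show ?case by (auto simp: fill_zero)
next
  case (Suc m)
  define sl where "sl = (\<lambda>i. cap i - c i)"
  define j where "j = lo + int m"
  define oc where "oc = (\<lambda>i. if i < lo + int m then (if i < lo then c i else min (kar cap c lo (nat (i - lo))) (cap i - c i))
          else c i + fill sl (lo + int m) (kar cap c lo m) i)"
  define K where "K = kar cap c lo m"
  have occ: "\<forall>i>j. oc i = c i + fill sl (j+1) (K - sl j) i"
    using fill_shift[of j _ sl K] by (auto simp: oc_def j_def K_def)
  note mv = moves[OF cap1 le hi, of j oc "K - sl j" "c j", folded sl_def, OF occ]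
  have "fold (\<lambda>p occ. bbbs_move cap occ p) (concat (map (\<lambda>m. replicate (c (lo + int m)) (lo + int m)) [0..<Suc m])) c
     = ((\<lambda>occ. bbbs_move cap occ j)^^(c j)) oc"
    using Suc unfolding oc_def sl_def j_def by simp
  also have "\<dots> = (\<lambda>i. if i = j then oc j - c j else if j < i then c i + fill sl (j+1) (K - sl j + c j) i else oc i)"
    by (rule mv)
  also have "\<dots> = (\<lambda>i. if i < lo + int (Suc m) then (if i < lo then c i else min (kar cap c lo (nat (i - lo))) (cap i - c i))
          else c i + fill sl (lo + int (Suc m)) (kar cap c lo (Suc m)) i)"
  proof
    fix i
    have kS: "kar cap c lo (Suc m) = K - sl j + c j" by (simp add: K_def sl_def j_def)
    have nj: "nat (j - lo) = m" by (simp add: j_def)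
    show "(if i = j then oc j - c j else if j < i then c i + fill sl (j+1) (K - sl j + c j) i else oc i) =
      (if i < lo + int (Suc m) then (if i < lo then c i else min (kar cap c lo (nat (i - lo))) (cap i - c i))
          else c i + fill sl (lo + int (Suc m)) (kar cap c lo (Suc m)) i)"
      using nj by (auto simp: kS oc_def j_def fill_at K_def sl_def min.commute ac_simps)
  qed
  finally show ?case unfolding sl_def by simp
qed

lemma concat_filter_rep: "concat (map (\<lambda>k. replicate (c k) k) (filter (\<lambda>k. 0 < c k) xs)) = concat (map (\<lambda>k. replicate (c k) k) xs)"
  by (induction xs) auto

lemma GL:
  fixes cap c :: "int \<Rightarrow> nat"
  assumes cap1: "\<forall>i. 1 \<le> cap i" and le: "\<forall>i. c i \<le> cap i" and below: "\<forall>i<lo. c i = 0"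
    and hi: "\<forall>i\<ge>hi. c i = 0"
  shows "fold (\<lambda>p occ. bbbs_move cap occ p) (concat (map (\<lambda>k. replicate (c k) k) (sorted_list_of_set {k. 0 < c k}))) c i
     = (if i < lo then c i else min (kar cap c lo (nat (i - lo))) (cap i - c i))"
proof -
  define N where "N = nat (max (hi - lo) (i - lo + 1))"
  define xs where "xs = map (\<lambda>m. lo + int m) [0..<N]"
  have setx: "set xs = {lo..<lo + int N}"
  proof
    show "set xs \<subseteq> {lo..<lo + int N}" by (auto simp: xs_def)
    show "{lo..<lo + int N} \<subseteq> set xs"
    proof
      fix k assume k: "k \<in> {lo..<lo + int N}"
      then have "k = lo + int (nat (k - lo))" "nat (k - lo) < N" by auto
      then show "k \<in> set xs" unfolding xs_def by (metis atLeastLessThan_iff image_eqI le0 set_map set_upt)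
    qed
  qed
  have sx: "sorted xs" unfolding xs_def by (simp add: sorted_iff_nth_mono)
  have dx: "distinct xs" unfolding xs_def by (simp add: distinct_map inj_on_def)
  have sub: "{k. 0 < c k} \<subseteq> {lo..<lo + int N}"
  proof
    fix k assume "k \<in> {k. 0 < c k}"
    then have "lo \<le> k" "k < hi" using below hi by (auto simp: not_less[symmetric])
    then show "k \<in> {lo..<lo + int N}" by (auto simp: N_def)
  qed
  have fin: "finite {k. 0 < c k}" by (rule finite_subset[OF sub]) auto
  have L1: "sorted_list_of_set {k. 0 < c k} = filter (\<lambda>k. 0 < c k) xs"
  proof (rule sorted_distinct_set_unique)
    show "set (sorted_list_of_set {k. 0 < c k}) = set (filter (\<lambda>k. 0 < c k) xs)"
      using fin sub setx by auto
  qed (use fin sx dx in \<open>auto intro: sorted_wrt_filter\<close>)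
  have L: "concat (map (\<lambda>k. replicate (c k) k) (sorted_list_of_set {k. 0 < c k}))
     = concat (map (\<lambda>m. replicate (c (lo + int m)) (lo + int m)) [0..<N])"
    unfolding L1 concat_filter_rep xs_def by (simp add: comp_def)
  have "i < lo + int N" by (auto simp: N_def)
  then show ?thesis unfolding L inv[OF cap1 le hi] by simp
qed

lemma int_least:
  fixes P :: "int \<Rightarrow> bool"
  assumes "P t0" "\<forall>t. P t \<longrightarrow> p < t"
  shows "P (LEAST t. P t)" "\<And>t. P t \<Longrightarrow> (LEAST t. P t) \<le> t"
proof -
  let ?A = "{x. p < x \<and> x \<le> t0 \<and> P x}"
  have fin: "finite ?A" by (rule finite_subset[of _ "{p..t0}"]) auto
  have ne: "t0 \<in> ?A" using assms by auto
  define x where "x = Min ?A"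
  have xA: "x \<in> ?A" unfolding x_def using fin ne by (intro Min_in) auto
  have xm: "\<forall>y. P y \<longrightarrow> x \<le> y"
  proof (intro allI impI)
    fix y assume y: "P y"
    show "x \<le> y"
    proof (cases "y \<le> t0")
      case True then have "y \<in> ?A" using y assms by auto
      then show ?thesis unfolding x_def using fin by auto
    next
      case False then show ?thesis using xA by auto
    qed
  qed
  have "(LEAST t. P t) = x" by (rule Least_equality) (use xA xm in auto)
  then show "P (LEAST t. P t)" "\<And>t. P t \<Longrightarrow> (LEAST t. P t) \<le> t" using xA xm by auto
qed

definition ind :: "int set \<Rightarrow> int \<Rightarrow> nat" where "ind A n = (if n \<in> A then 1 else 0)"

lemma sim_step:
  assumes "finite A"
  shows "ind (bbs_move A p) = bbbs_move (\<lambda>_. 1) (ind A) p" "finite (bbs_move A p)"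
proof -
  define t where "t = (LEAST t. p < t \<and> t \<notin> A)"
  define t0 where "t0 = Max (insert p A) + 1"
  have "p < t0 \<and> t0 \<notin> A"
  proof -
    have "p \<le> Max (insert p A)" using assms by auto
    moreover have "\<forall>a\<in>A. a \<le> Max (insert p A)" using assms by auto
    ultimately show ?thesis unfolding t0_def by fastforce
  qed
  then have tP: "p < t \<and> t \<notin> A" unfolding t_def by (rule int_least(1)) auto
  have eqP: "(\<lambda>t. p < t \<and> ind A t < 1) = (\<lambda>t. p < t \<and> t \<notin> A)"
    by (auto simp: ind_def)
  have "bbbs_move (\<lambda>_. 1) (ind A) p = (ind A)(p := ind A p - 1, t := ind A t + 1)"
    unfolding bbbs_move_def eqP t_def by (simp add: Let_def)
  moreover have "bbs_move A p = insert t (A - {p})"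
    unfolding bbs_move_def t_def by (simp add: Let_def)
  ultimately show "ind (bbs_move A p) = bbbs_move (\<lambda>_. 1) (ind A) p" "finite (bbs_move A p)"
    using tP assms by (auto simp: ind_def fun_eq_iff)
qed

lemma sim_fold:
  "finite A \<Longrightarrow> ind (fold (\<lambda>p Occ. bbs_move Occ p) xs A) = fold (\<lambda>p occ. bbbs_move (\<lambda>_. 1) occ p) xs (ind A)"
proof (induction xs arbitrary: A)
  case Nil then show ?case by simp
next
  case (Cons x xs)
  then show ?case using sim_step[OF Cons(2), of x] by simp
qed

lemma concat_ind: "set xs \<subseteq> A \<Longrightarrow> concat (map (\<lambda>k. replicate (ind A k) k) xs) = xs"
  by (induction xs) (auto simp: ind_def)

lemma TBBS_char:
  assumes "finite {n. f n}"
  shows "T_BBS f n \<longleftrightarrow> fold (\<lambda>p occ. bbbs_move (\<lambda>_. 1) occ p)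
      (concat (map (\<lambda>k. replicate (ind {n. f n} k) k) (sorted_list_of_set {k. 0 < ind {n. f n} k}))) (ind {n. f n}) n = 1"
proof -
  have e: "{k. 0 < ind {n. f n} k} = {n. f n}" by (auto simp: ind_def)
  have "concat (map (\<lambda>k. replicate (ind {n. f n} k) k) (sorted_list_of_set {k. 0 < ind {n. f n} k}))
      = sorted_list_of_set {n. f n}" unfolding e by (rule concat_ind) (use assms in auto)
  moreover have "T_BBS f n \<longleftrightarrow> ind (fold (\<lambda>p Occ. bbs_move Occ p) (sorted_list_of_set {n. f n}) {n. f n}) n = 1"
    by (simp add: T_BBS_def ind_def)
  ultimately show ?thesis using sim_fold[OF assms, of "sorted_list_of_set {n. f n}"] by simp
qed

lemma kar_rec:
  assumes "lo \<le> i"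
  shows "kar cap c lo (nat (i + 1 - lo)) = kar cap c lo (nat (i - lo)) - (cap i - c i) + c i"
proof -
  have "nat (i + 1 - lo) = Suc (nat (i - lo))" using assms by auto
  moreover have "lo + int (nat (i - lo)) = i" using assms by auto
  ultimately show ?thesis by simp
qed

lemma run0:
  assumes "lo \<le> u" "\<forall>k<x. c (u + int k) = 0"
  shows "kar (\<lambda>_. 1) c lo (nat (u + int x - lo)) = kar (\<lambda>_. 1) c lo (nat (u - lo)) - x"
  using assms(2)
proof (induction x)
  case 0 then show ?case by simp
next
  case (Suc x)
  have "c (u + int x) = 0" using Suc by auto
  moreover have "u + int (Suc x) - lo = (u + int x) + 1 - lo" by simp
  ultimately show ?case using Suc kar_rec[of lo "u + int x" "\<lambda>_. 1" c] assms(1) by (simp add: ac_simps)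
qed

lemma run1:
  assumes "lo \<le> u" "\<forall>k<x. c (u + int k) = 1"
  shows "kar (\<lambda>_. 1) c lo (nat (u + int x - lo)) = kar (\<lambda>_. 1) c lo (nat (u - lo)) + x"
  using assms(2)
proof (induction x)
  case 0 then show ?case by simp
next
  case (Suc x)
  have "c (u + int x) = 1" using Suc by auto
  moreover have "u + int (Suc x) - lo = (u + int x) + 1 - lo" by simp
  ultimately show ?case using Suc kar_rec[of lo "u + int x" "\<lambda>_. 1" c] assms(1) by (simp add: ac_simps)
qed

lemma mono_st:
  fixes st :: "int \<Rightarrow> int"
  assumes "\<forall>i. st i \<le> st (i+1)" "i \<le> j"
  shows "st i \<le> st j"
  using assms(2)
proof (induction j rule: int_ge_induct)
  case base then show ?case by simp
next
  case (step j) then show ?case using assms(1) order_trans by blast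
qed



lemma site_start_Suc: "site_start S i0 (i+1) = site_start S i0 i + int (s_b (S i)) + 1"
proof (cases "i0 \<le> i")
  case True then show ?thesis by (simp add: site_start_def ivl_insert)
next
  case False
  then have e: "{i..<i0} = insert i {i+1..<i0}" by auto
  show ?thesis
  proof (cases "i + 1 = i0")
    case True then show ?thesis using False by (simp add: site_start_def e)
  next
    case False2: False
    then show ?thesis using False by (simp add: site_start_def e)
  qed
qed

lemma site_start_0: "site_start S i0 i0 = 0" by (simp add: site_start_def)

locale bb =
  fixes S :: bbbs_state and i0 :: int
  assumes st: "is_bbbs_state S" and low: "\<forall>i\<le>i0. S i = Vsite"
begin

lemma valid_i: "int (s_a (S i)) = int (s_b (S i)) - int (s_c (S i)) + 1"
  using st by (simp add: is_bbbs_state_def valid_site_def)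

lemma F1: "s_c (S i) \<le> s_b (S i) + 1" using valid_i[of i] by linarith
lemma F2: "empty_baskets (S i) + s_c (S i) \<le> s_b (S i) + 1" "empty_baskets (S i) \<le> s_b (S i)"
  using valid_i[of i] by (auto simp: empty_baskets_def min_def)
lemma F3: "1 + (s_b (S i) - empty_baskets (S i)) = (if s_c (S i) = 0 then 1 else s_c (S i))"
  using valid_i[of i] by (auto simp: empty_baskets_def min_def)

lemma Vf: "i \<le> i0 \<Longrightarrow> s_c (S i) = 0 \<and> s_b (S i) = 0 \<and> empty_baskets (S i) = 0"
  using low by (auto simp: Vsite_def s_c_def s_b_def s_a_def empty_baskets_def)

lemma hi_ex: "\<exists>hi. i0 < hi \<and> (\<forall>i\<ge>hi. S i = Vsite)"
proof -
  have fin: "finite {i. S i \<noteq> Vsite}" using st by (simp add: is_bbbs_state_def)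
  define hi where "hi = Max (insert i0 {i. S i \<noteq> Vsite}) + 1"
  have "\<forall>i\<ge>hi. S i = Vsite"
  proof (intro allI impI)
    fix i assume "hi \<le> i"
    show "S i = Vsite"
    proof (rule ccontr)
      assume "S i \<noteq> Vsite"
      then have "i \<le> Max (insert i0 {i. S i \<noteq> Vsite})" using fin by auto
      then show False using \<open>hi \<le> i\<close> by (simp add: hi_def)
    qed
  qed
  moreover have "i0 < hi" using fin by (simp add: hi_def)
  ultimately show ?thesis by blast
qed

definition hi where "hi = (SOME hi. i0 < hi \<and> (\<forall>i\<ge>hi. S i = Vsite))"
lemma hi: "i0 < hi" "\<And>i. hi \<le> i \<Longrightarrow> S i = Vsite"
  using someI_ex[OF hi_ex] unfolding hi_def[symmetric] by auto

lemma c_hi: "hi \<le> i \<Longrightarrow> s_c (S i) = 0"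
  using hi(2) by (auto simp: Vsite_def s_c_def)

lemma capB: "cap_after S i = 1 + (s_b (S i) - empty_baskets (S i)) + empty_baskets (S (i - 1))"
  by (simp add: cap_after_def baskets_after_def)

lemma capB_ge: "1 \<le> cap_after S i" "s_c (S i) \<le> cap_after S i"
  using capB[of i] F3[of i] by (auto split: if_splits)

definition occB where
  "occB = fold (\<lambda>p occ. bbbs_move (cap_after S) occ p) (ball_list S) (\<lambda>i. s_c (S i))"

abbreviation "KS \<equiv> kar (cap_after S) (\<lambda>i. s_c (S i)) i0"

lemma occB: "occB i = (if i < i0 then s_c (S i) else min (KS (nat (i - i0))) (cap_after S i - s_c (S i)))"
  unfolding occB_def ball_list_def
  by (rule GL) (use capB_ge Vf c_hi in auto)

lemma occB_le: "occB i \<le> cap_after S i"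
  using occB[of i] capB_ge[of i] by auto

lemma occB_low: "i < i0 \<Longrightarrow> occB i = 0"
  using occB[of i] Vf[of i] by auto

lemma Tinf: "T_inf S i = (cap_after S i - occB i, cap_after S i - 1, occB i)"
  unfolding T_inf_def occB_def by (simp add: Let_def)

abbreviation "st \<equiv> site_start S i0"
abbreviation "st' \<equiv> site_start (T_inf S) i0"

lemma st'_Suc: "st' (i+1) = st' i + int (cap_after S i)"
  using site_start_Suc[of "T_inf S" i0 i] capB_ge(1)[of i] by (simp add: Tinf s_b_def)

lemma st_mono: "i \<le> j \<Longrightarrow> st i \<le> st j"
  by (rule mono_st) (use site_start_Suc in auto)
lemma st'_mono: "i \<le> j \<Longrightarrow> st' i \<le> st' j"
  by (rule mono_st) (use st'_Suc in auto)

abbreviation "U \<equiv> Unb S i0"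

lemma U_iff: "U n \<longleftrightarrow> (\<exists>i. st i \<le> n \<and> n < st i + int (s_c (S i)))"
  by (simp add: Unb_def)

lemma cc_one: "st i \<le> n \<Longrightarrow> n < st i + int (s_c (S i)) \<Longrightarrow> U n"
  using U_iff by blast

lemma cc_zero:
  assumes "st i + int (s_c (S i)) \<le> n" "n < st (i+1)"
  shows "\<not> U n"
proof
  assume "U n"
  then obtain j where j: "st j \<le> n" "n < st j + int (s_c (S j))" using U_iff by blast
  consider "j < i" | "j = i" | "i < j" by linarith
  then show False
  proof cases
    case 1
    then have "st (j+1) \<le> st i" by (intro st_mono) auto
    moreover have "st (j+1) \<ge> st j + int (s_c (S j))" using site_start_Suc[of S i0 j] F1[of j] by simp
    ultimately show False using j assms by linarith
  next
    case 2 then show False using j assms by auto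
  next
    case 3
    then have "st (i+1) \<le> st j" by (intro st_mono) auto
    then show False using j assms by linarith
  qed
qed

lemma U_range: "U n \<Longrightarrow> 0 \<le> n \<and> n < st hi"
proof -
  assume "U n"
  then obtain j where j: "st j \<le> n" "n < st j + int (s_c (S j))" using U_iff by blast
  then have "0 < s_c (S j)" by auto
  then have ij: "i0 < j" "j < hi" using Vf[of j] c_hi[of j] by (metis not_le not_less0)+
  have "0 \<le> st j" using st_mono[of i0 j] ij site_start_0[of S i0] by auto
  moreover have "st (j+1) \<le> st hi" using ij by (intro st_mono) auto
  moreover have "st (j+1) \<ge> st j + int (s_c (S j))" using site_start_Suc[of S i0 j] F1[of j] by simp
  ultimately show ?thesis using j by linarith
qed

lemma finU: "finite {n. U n}"
  by (rule finite_subset[of _ "{0..<st hi}"]) (use U_range in auto)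

abbreviation "cc \<equiv> ind {n. U n}"
abbreviation "KC \<equiv> kar (\<lambda>_. 1) cc 0"

definition occC where "occC n = (if n < 0 then cc n else min (KC (nat n)) (1 - cc n))"

lemma TBBS_U: "T_BBS U n \<longleftrightarrow> occC n = 1"
proof -
  have "fold (\<lambda>p occ. bbbs_move (\<lambda>_. 1) occ p)
      (concat (map (\<lambda>k. replicate (cc k) k) (sorted_list_of_set {k. 0 < cc k}))) cc n = occC n"
  proof -
    have a: "\<forall>i. 1 \<le> (1::nat)" "\<forall>i. cc i \<le> 1" "\<forall>i<0. cc i = 0" "\<forall>i\<ge>st hi. cc i = 0"
      using U_range by (auto simp: ind_def) (meson U_range not_le)+
    show ?thesis using GL[of "\<lambda>_. 1" cc 0 "st hi" n] a unfolding occC_def by simp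
  qed
  then show ?thesis using TBBS_char[OF finU, of n] by simp
qed


abbreviation "eB i \<equiv> empty_baskets (S i)"

lemma KC_run0: "0 \<le> u \<Longrightarrow> \<forall>k<x. cc (u + int k) = 0 \<Longrightarrow> KC (nat (u + int x)) = KC (nat u) - x"
  using run0[of 0 u x cc] by simp
lemma KC_run1: "0 \<le> u \<Longrightarrow> \<forall>k<x. cc (u + int k) = 1 \<Longrightarrow> KC (nat (u + int x)) = KC (nat u) + x"
  using run1[of 0 u x cc] by simp

lemma region:
  assumes i: "i0 \<le> i" and u: "st' i = st i - int (eB (i-1))"
    and K: "KC (nat (st' i)) = KS (nat (i - i0))" and nn: "0 \<le> st' i"
  shows "KC (nat (st' i + int (cap_after S i))) = KS (nat (i + 1 - i0))"
    "\<forall>k < cap_after S i. occC (st' i + int k) = (if k < occB i then 1 else 0)"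
proof -
  define x where "x = eB (i-1)"
  define Kv where "Kv = KS (nat (i - i0))"
  define sl where "sl = cap_after S i - s_c (S i)"
  define c where "c = s_c (S i)"
  have KS1: "KS (nat (i + 1 - i0)) = Kv - sl + c"
    using kar_rec[OF i, of "cap_after S" "\<lambda>i. s_c (S i)"] by (simp add: Kv_def sl_def c_def)
  have oB: "occB i = min Kv sl" using occB[of i] i by (simp add: Kv_def sl_def)
  have cap: "cap_after S i = (if c = 0 then 1 else c) + x"
    using capB[of i] F3[of i] by (simp add: x_def c_def)
  have sti: "st i = st (i - 1) + int (s_b (S (i-1))) + 1"
    using site_start_Suc[of S i0 "i-1"] by simp
  have stS: "st (i+1) = st i + int (s_b (S i)) + 1" by (rule site_start_Suc)
  have F2': "x + s_c (S (i-1)) \<le> s_b (S (i-1)) + 1" using F2(1)[of "i-1"] by (simp add: x_def)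
  have e0: "\<forall>k<x. cc (st' i + int k) = 0"
  proof (intro allI impI)
    fix k assume "k < x"
    have "\<not> U (st' i + int k)"
      by (rule cc_zero[of "i-1"]) (use u sti F2' \<open>k < x\<close> in \<open>auto simp: x_def\<close>)
    then show "cc (st' i + int k) = 0" by (simp add: ind_def)
  qed
  have KCk: "\<And>k. k \<le> x \<Longrightarrow> KC (nat (st' i + int k)) = Kv - k"
    using KC_run0[OF nn] e0 K by (auto simp: Kv_def)
  have occ0: "\<And>k. k < x \<Longrightarrow> occC (st' i + int k) = (if k < Kv then 1 else 0)"
    using KCk e0 nn by (auto simp: occC_def)
  have stx: "st' i + int x = st i" using u by (simp add: x_def)
  have R: "KC (nat (st' i + int (cap_after S i))) = KS (nat (i + 1 - i0)) \<and>
     (\<forall>k. k < cap_after S i \<longrightarrow> occC (st' i + int k) = (if k < occB i then 1 else 0))"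
  proof (cases "c = 0")
    case True
    have sl1: "sl = x + 1" using cap True by (simp add: sl_def c_def)
    have e1: "\<forall>k<x+1. cc (st' i + int k) = 0"
    proof (intro allI impI)
      fix k assume k: "k < x + 1"
      show "cc (st' i + int k) = 0"
      proof (cases "k < x")
        case True then show ?thesis using e0 by auto
      next
        case False
        then have "k = x" using k by auto
        have "\<not> U (st i)"
          by (rule cc_zero[of i]) (use stS True in \<open>auto simp: c_def\<close>)
        then show ?thesis using \<open>k = x\<close> stx by (simp add: ind_def)
      qed
    qed
    have "KC (nat (st' i + int (x + 1))) = Kv - (x+1)"
      using KC_run0[OF nn e1] K by (simp add: Kv_def)
    then have A1: "KC (nat (st' i + int (cap_after S i))) = KS (nat (i + 1 - i0))"
      using cap True KS1 sl1 by simp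
    have A2: "occC (st' i + int k) = (if k < occB i then 1 else 0)" if kc: "k < cap_after S i" for k
    proof -
      have k: "k < x + 1" using kc cap True by simp
      have "KC (nat (st' i + int k)) = Kv - k"
        using KC_run0[OF nn, of k] e1 k K by (simp add: Kv_def)
      moreover have "cc (st' i + int k) = 0" using e1 k by auto
      ultimately have "occC (st' i + int k) = (if k < Kv then 1 else 0)"
        using nn by (simp add: occC_def)
      then show ?thesis using oB sl1 k by auto
    qed
    show ?thesis using A1 A2 by blast
  next
    case False
    have slx: "sl = x" using cap False by (simp add: sl_def c_def)
    have e1: "\<forall>k<c. cc (st i + int k) = 1"
    proof (intro allI impI)
      fix k assume "k < c"
      have "U (st i + int k)" by (rule cc_one[of i]) (use \<open>k < c\<close> in \<open>auto simp: c_def\<close>)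
      then show "cc (st i + int k) = 1" by (simp add: ind_def)
    qed
    have stn: "0 \<le> st i" using nn stx by linarith
    have KCx: "KC (nat (st i)) = Kv - x" using KCk[of x] stx by simp
    have "KC (nat (st i + int c)) = Kv - x + c"
      using KC_run1[OF stn e1] KCx by simp
    moreover have "st' i + int (cap_after S i) = st i + int c" using cap False stx by simp
    ultimately have A1: "KC (nat (st' i + int (cap_after S i))) = KS (nat (i + 1 - i0))"
      using KS1 slx by simp
    have A2: "occC (st' i + int k) = (if k < occB i then 1 else 0)" if kc: "k < cap_after S i" for k
    proof -
      have k: "k < c + x" using kc cap False by simp
      show ?thesis
      proof (cases "k < x")
        case True then show ?thesis using occ0 oB slx by auto
      next
        case False
        then have "k - x < c" using k by auto
        then have "cc (st i + int (k - x)) = 1" using e1 by blast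
        moreover have "st i + int (k - x) = st' i + int k" using stx False by simp
        ultimately have "occC (st' i + int k) = 0" using nn by (simp add: occC_def)
        then show ?thesis using False oB slx by simp
      qed
    qed
    show ?thesis using A1 A2 by blast
  qed
  then show "KC (nat (st' i + int (cap_after S i))) = KS (nat (i + 1 - i0))"
    "\<forall>k < cap_after S i. occC (st' i + int k) = (if k < occB i then 1 else 0)" by auto
qed


lemma inv_sites: "i0 \<le> i \<Longrightarrow> st' i = st i - int (eB (i-1)) \<and> KC (nat (st' i)) = KS (nat (i - i0)) \<and> 0 \<le> st' i"
proof (induction i rule: int_ge_induct)
  case base
  have "eB (i0 - 1) = 0" using Vf[of "i0 - 1"] by simp
  then show ?case using site_start_0[of S i0] site_start_0[of "T_inf S" i0] by simp
next
  case (step i)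
  then have IH: "st' i = st i - int (eB (i-1))" "KC (nat (st' i)) = KS (nat (i - i0))" "0 \<le> st' i" by auto
  have a: "st' (i+1) = st' i + int (cap_after S i)" by (rule st'_Suc)
  have b: "st (i+1) = st i + int (s_b (S i)) + 1" by (rule site_start_Suc)
  have c: "int (cap_after S i) = 1 + int (s_b (S i)) - int (eB i) + int (eB (i-1))"
    using capB[of i] F2(2)[of i] by simp
  show ?case using region(1)[OF step(1) IH] IH a b c by simp
qed

lemma occ_region: "i0 \<le> i \<Longrightarrow> k < cap_after S i \<Longrightarrow> occC (st' i + int k) = (if k < occB i then 1 else 0)"
  using region(2)[of i] inv_sites[of i] by blast

lemma locate: "0 \<le> n \<Longrightarrow> \<exists>i\<ge>i0. st' i \<le> n \<and> n < st' (i+1)"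
proof (induction n rule: int_ge_induct)
  case base
  show ?case using site_start_0[of "T_inf S" i0] st'_Suc[of i0] capB_ge(1)[of i0] by (intro exI[of _ i0]) auto
next
  case (step n)
  then obtain i where i: "i0 \<le> i" "st' i \<le> n" "n < st' (i+1)" by auto
  show ?case
  proof (cases "n + 1 < st' (i+1)")
    case True then show ?thesis using i by (intro exI[of _ i]) auto
  next
    case False
    then have "n + 1 = st' (i+1)" using i by auto
    moreover have "st' (i+1+1) \<ge> st' (i+1) + 1" using st'_Suc[of "i+1"] capB_ge(1)[of "i+1"] by simp
    ultimately show ?thesis using i by (intro exI[of _ "i+1"]) auto
  qed
qed

lemma main_loc: "Unb (T_inf S) i0 n \<longleftrightarrow> T_BBS U n"
proof -
  have L: "Unb (T_inf S) i0 n \<longleftrightarrow> (\<exists>i. st' i \<le> n \<and> n < st' i + int (occB i))"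
    by (simp add: Unb_def Tinf s_c_def)
  have stp: "\<And>j. st' j + int (occB j) \<le> st' (j+1)" using st'_Suc occB_le by (simp)
  show ?thesis
  proof (cases "n < 0")
    case True
    have "occC n = 0" using True U_range[of n] by (auto simp: occC_def ind_def)
    moreover have "\<not> (st' i \<le> n \<and> n < st' i + int (occB i))" for i
    proof (cases "i < i0")
      case True then show ?thesis using occB_low by auto
    next
      case False then show ?thesis using inv_sites[of i] \<open>n < 0\<close> by auto
    qed
    ultimately show ?thesis using L TBBS_U by auto
  next
    case False
    then obtain i where i: "i0 \<le> i" "st' i \<le> n" "n < st' (i+1)" using locate[of n] False by (auto simp: not_less)
    define k where "k = nat (n - st' i)"
    have nk: "n = st' i + int k" using i by (simp add: k_def)
    have kc: "k < cap_after S i" using i st'_Suc[of i] nk by simp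
    have R: "occC n = (if k < occB i then 1 else 0)" using occ_region[OF i(1) kc] nk by simp
    have "(\<exists>j. st' j \<le> n \<and> n < st' j + int (occB j)) \<longleftrightarrow> k < occB i"
    proof
      assume "\<exists>j. st' j \<le> n \<and> n < st' j + int (occB j)"
      then obtain j where j: "st' j \<le> n" "n < st' j + int (occB j)" by blast
      consider "j < i" | "j = i" | "i < j" by linarith
      then show "k < occB i"
      proof cases
        case 1
        then have "st' (j+1) \<le> st' i" by (intro st'_mono) auto
        then show ?thesis using stp[of j] j i by linarith
      next
        case 2 then show ?thesis using j nk by simp
      next
        case 3
        then have "st' (i+1) \<le> st' j" by (intro st'_mono) auto
        then show ?thesis using j i by linarith
      qed
    next
      assume "k < occB i"
      then show "\<exists>j. st' j \<le> n \<and> n < st' j + int (occB j)" using nk by (intro exI[of _ i]) auto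
    qed
    then show ?thesis using L TBBS_U R by auto
  qed
qed

end

theorem mainTheorem4:
  fixes S :: bbbs_state and i0 :: int
  assumes "is_bbbs_state S"
    and "\<forall>i\<le>i0. S i = Vsite \<and> T_inf S i = Vsite"
  shows "Unb (T_inf S) i0 = T_BBS (Unb S i0)"
proof -
  interpret bb S i0 using assms by (unfold_locales) auto
  show ?thesis using main_loc by (intro ext) simp
qed

end
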